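(* Suppose all dynamical systems in $\mathcal{F}$ are $(\bar C_\rho,\bar\rho)$-stable with $\bar\rho<1$ and the algorithmic stability condition for dynamical systems (below) holds with constant $K$. Assume input and noise spaces $\mathcal{X},\mathcal{W}$ are bounded by $\bar x,\bar w$. Let $W = (\mathbf{w}_1, \dots, \mathbf{w}_{m})$ and $W' = (\mathbf{w}_1, \dots, \mathbf{w}_{j-1}, \mathbf{w}'_j, \mathbf{w}_{j+1}, \dots, \mathbf{w}_{m})$ be two noise sequences differing only in the $j$'th term, producing trajectories $\mathcal{S}^{(m)}$ and $\mathcal{S}^{(m)}_j$ with final states $\mathbf{x}_m,\mathbf{x}'_m$. Then, for any $f \in \mathcal{F}$, $\mathrm{Alg} \in \mathcal{A}$, $W$, $W'$, $m$, and $j < m$, \[ \Big|\mathbb{E}_{\mathbf{x}_{m+1}}[\ell(\mathbf{x}_{m+1}, f^{\mathrm{Alg}}_{\mathcal{S}^{(m)}}(\mathbf{x}_m))] -\mathbb{E}_{\mathbf{x}_{m+1}}[\ell(\mathbf{x}_{m+1},f^{\mathrm{Alg}}_{\mathcal{S}^{(m)}_j}(\mathbf{x}'_m))] \Big|< \frac{K}{m} \frac{2\bar{C}_{\rho}\bar{w}}{1- \bar{\rho}}. \] Additionally, for sequences that differ only at their initial states $\mathbf{x}_0,\mathbf{x}_0'\in\mathcal{X}$, the same difference is $< \frac{K}{m} \frac{2\bar{C}_{\rho}\bar{x}}{1- \bar{\rho}}$.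
   Context: Dynamics: $\mathbf{x}_i=f(\mathbf{x}_{i-1})+\mathbf{w}_i$, $\mathbf{w}_i\in\mathcal{W}$; an algorithm maps the trajectory prefix $\mathcal{S}^{(m)}=(\mathbf{x}_0,\dots,\mathbf{x}_m)$ to a predictor $f^{\mathrm{Alg}}_{\mathcal{S}^{(m)}}:\mathcal{X}\to\mathcal{X}$. $(C_\rho,\rho)$-stability: denoting by $f^{(m)}(\mathbf{x}_0)$ the state after $m$ steps from $\mathbf{x}_0$ under a given noise sequence, $\|f^{(m)}(\mathbf{x}_0)-f^{(m)}(\mathbf{x}_0')\|_2\leq C_\rho\rho^m\|\mathbf{x}_0-\mathbf{x}_0'\|_2$ for all initial states, $m\geq1$ and noise in $\mathcal{W}$. Algorithmic stability for dynamical systems: if $\mathcal{S}^j$ is obtained from $\mathcal{S}=(\mathbf{x}_0,\dots,\mathbf{x}_m)$ by replacing $\mathbf{w}_j$ with $\mathbf{w}'_j$ (or $\mathbf{x}_0$ by $\mathbf{x}_0'$ when $j=0$), yielding states $(\mathbf{x}'_j,\dots,\mathbf{x}'_m)$, then $|\mathbb{E}_{\mathbf{w}_{m+1}}[\ell(\mathbf{x}_{m+1},f^{\mathrm{Alg}}_{\mathcal{S}}(\mathbf{x}_m))]-\mathbb{E}_{\mathbf{w}_{m+1}}[\ell(\mathbf{x}_{m+1},f^{\mathrm{Alg}}_{\mathcal{S}^j}(\mathbf{x}'_m))]|\leq\frac{K}{m}\sum_{i=j}^m\|\mathbf{x}_i-\mathbf{x}'_i\|_2$.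
   Formalization: The stability constant satisfies $\bar C_\rho \geq 1$, the numbers $\bar\rho$, K, $\bar x$, $\bar w$ are positive, and f(x)+w lies in X for every f in F, x in X and w in W. Each condition added here is assumed in the paper as well or is needed for the statement above to hold. *)

theory Defs
  imports "HOL-Probability.Probability"
begin

text \<open>State after n steps of x_i = f(x_{i-1}) + w_i started at x0 (w 0 is unused).\<close>
fun traj :: "('a::real_normed_vector \<Rightarrow> 'a) \<Rightarrow> 'a \<Rightarrow> (nat \<Rightarrow> 'a) \<Rightarrow> nat \<Rightarrow> 'a" where
  "traj f x0 w 0 = x0"
| "traj f x0 w (Suc n) = f (traj f x0 w n) + w (Suc n)"

definition prefix :: "('a::real_normed_vector \<Rightarrow> 'a) \<Rightarrow> 'a \<Rightarrow> (nat \<Rightarrow> 'a) \<Rightarrow> nat \<Rightarrow> 'a list" where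
  "prefix f x0 w m = map (traj f x0 w) [0..<Suc m]"

definition exp_loss :: "'a::real_normed_vector measure \<Rightarrow> ('a \<Rightarrow> 'a \<Rightarrow> real) \<Rightarrow> ('a \<Rightarrow> 'a)
    \<Rightarrow> ('a list \<Rightarrow> 'a \<Rightarrow> 'a) \<Rightarrow> 'a list \<Rightarrow> 'a \<Rightarrow> real" where
  "exp_loss D loss f alg S x = (\<integral>w. loss (f x + w) (alg S x) \<partial>D)"

definition sys_stable :: "'a::real_normed_vector set \<Rightarrow> 'a set \<Rightarrow> ('a \<Rightarrow> 'a) \<Rightarrow> real \<Rightarrow> real \<Rightarrow> bool" where
  "sys_stable X W f C \<rho> \<longleftrightarrow>
    (\<forall>x0\<in>X. \<forall>x0'\<in>X. \<forall>w. (\<forall>i. w i \<in> W) \<longrightarrow>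
      (\<forall>m\<ge>1. norm (traj f x0 w m - traj f x0' w m) \<le> C * \<rho> ^ m * norm (x0 - x0')))"

definition alg_stable :: "'a::real_normed_vector set \<Rightarrow> 'a set \<Rightarrow> 'a measure \<Rightarrow> ('a \<Rightarrow> 'a \<Rightarrow> real)
    \<Rightarrow> ('a \<Rightarrow> 'a) set \<Rightarrow> ('a list \<Rightarrow> 'a \<Rightarrow> 'a) set \<Rightarrow> real \<Rightarrow> bool" where
  "alg_stable X W D loss F A K \<longleftrightarrow>
    (\<forall>f\<in>F. \<forall>alg\<in>A. \<forall>x0\<in>X. \<forall>w. (\<forall>i. w i \<in> W) \<longrightarrow> (\<forall>m\<ge>1.
      (\<forall>j w'. 1 \<le> j \<and> j \<le> m \<and> w' \<in> W \<longrightarrow>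
        \<bar>exp_loss D loss f alg (prefix f x0 w m) (traj f x0 w m)
         - exp_loss D loss f alg (prefix f x0 (w(j := w')) m) (traj f x0 (w(j := w')) m)\<bar>
        \<le> K / real m * (\<Sum>i=j..m. norm (traj f x0 w i - traj f x0 (w(j := w')) i))) \<and>
      (\<forall>x0'\<in>X.
        \<bar>exp_loss D loss f alg (prefix f x0 w m) (traj f x0 w m)
         - exp_loss D loss f alg (prefix f x0' w m) (traj f x0' w m)\<bar>
        \<le> K / real m * (\<Sum>i=0..m. norm (traj f x0 w i - traj f x0' w i)))))"

end

theory Submission
  imports Defs
begin

lemma traj_shift: "traj f x0 w (j + k) = traj f (traj f x0 w j) (\<lambda>i. w (j + i)) k"
  by (induction k) auto

lemma traj_cong: "(\<And>i. 1 \<le> i \<Longrightarrow> i \<le> n \<Longrightarrow> v i = v' i) \<Longrightarrow> traj f x v n = traj f x v' n"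
  by (induction n) auto

lemma traj_in:
  assumes "x0 \<in> X" "\<forall>i. w i \<in> W" "\<forall>x\<in>X. \<forall>v\<in>W. f x + v \<in> X"
  shows "traj f x0 w n \<in> X"
  using assms by (induction n) auto

lemma geom_lt:
  fixes \<rho> :: real
  assumes "0 < \<rho>" "\<rho> < 1"
  shows "(\<Sum>i=0..n. \<rho> ^ i) < 1 / (1 - \<rho>)"
proof -
  have "(1 - \<rho>) * (\<Sum>i=0..n. \<rho> ^ i) = 1 - \<rho> ^ Suc n"
  proof (induction n)
    case (Suc n)
    have "(1 - \<rho>) * (\<Sum>i=0..Suc n. \<rho> ^ i) = (1 - \<rho>) * (\<Sum>i=0..n. \<rho> ^ i) + (1 - \<rho>) * \<rho> ^ Suc n"
      by (simp add: algebra_simps)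
    also have "\<dots> = 1 - \<rho> ^ Suc (Suc n)" using Suc.IH by (simp add: algebra_simps)
    finally show ?case .
  qed simp
  then have "(\<Sum>i=0..n. \<rho> ^ i) = (1 - \<rho> ^ Suc n) / (1 - \<rho>)"
    using assms by (simp add: field_simps)
  also have "\<dots> < 1 / (1 - \<rho>)"
    using assms by (intro divide_strict_right_mono) auto
  finally show ?thesis .
qed

lemma sum_bound:
  fixes \<rho> B :: real
  assumes "0 < \<rho>" "\<rho> < 1" "0 < B" "\<And>i. i \<le> n \<Longrightarrow> a i \<le> B * \<rho> ^ i"
  shows "(\<Sum>i=0..n. a i) < B / (1 - \<rho>)"
proof -
  have "(\<Sum>i=0..n. a i) \<le> (\<Sum>i=0..n. B * \<rho> ^ i)"
    using assms(4) by (intro sum_mono) auto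
  also have "\<dots> = B * (\<Sum>i=0..n. \<rho> ^ i)" by (simp add: sum_distrib_left)
  also have "\<dots> < B * (1 / (1 - \<rho>))"
    using geom_lt[OF assms(1,2)] assms(3) by (intro mult_strict_left_mono) auto
  finally show ?thesis by simp
qed

lemma final_step:
  fixes K m S B :: real
  assumes "0 < K" "0 < m" "E \<le> K / m * S" "S < B"
  shows "E < K / m * B"
proof -
  have "K / m * S < K / m * B" using assms by (intro mult_strict_left_mono) auto
  thus ?thesis using assms(3) by linarith
qed

theorem lemma6:
  fixes X W :: "'a::real_normed_vector set" and D :: "'a measure"
    and loss :: "'a \<Rightarrow> 'a \<Rightarrow> real" and F :: "('a \<Rightarrow> 'a) set"
    and A :: "('a list \<Rightarrow> 'a \<Rightarrow> 'a) set" and C \<rho> K xb wb :: real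
  assumes "prob_space D" and "AE w in D. w \<in> W"
    and "\<forall>f\<in>F. \<forall>x\<in>X. \<forall>v\<in>W. f x + v \<in> X"
    and "\<forall>f\<in>F. sys_stable X W f C \<rho>"
    and "0 < \<rho>" and "\<rho> < 1" and "1 \<le> C" and "0 < K"
    and "alg_stable X W D loss F A K"
    and "\<forall>x\<in>X. norm x \<le> xb" and "\<forall>v\<in>W. norm v \<le> wb"
    and "0 < xb" and "0 < wb"
  shows "(\<forall>f\<in>F. \<forall>alg\<in>A. \<forall>x0\<in>X. \<forall>w. (\<forall>i. w i \<in> W) \<longrightarrow> (\<forall>w'\<in>W. \<forall>m j. 1 \<le> j \<and> j < m \<longrightarrow>
            \<bar>exp_loss D loss f alg (prefix f x0 w m) (traj f x0 w m)
             - exp_loss D loss f alg (prefix f x0 (w(j := w')) m) (traj f x0 (w(j := w')) m)\<bar>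
            < K / real m * (2 * C * wb / (1 - \<rho>))))
       \<and> (\<forall>f\<in>F. \<forall>alg\<in>A. \<forall>x0\<in>X. \<forall>x0'\<in>X. \<forall>w. (\<forall>i. w i \<in> W) \<longrightarrow> (\<forall>m. 0 < m \<longrightarrow>
            \<bar>exp_loss D loss f alg (prefix f x0 w m) (traj f x0 w m)
             - exp_loss D loss f alg (prefix f x0' w m) (traj f x0' w m)\<bar>
            < K / real m * (2 * C * xb / (1 - \<rho>))))"
proof (intro conjI ballI allI impI)
  fix f alg x0 and w :: "nat \<Rightarrow> 'a" and w' and m j :: nat
  assume f: "f \<in> F" and alg: "alg \<in> A" and x0: "x0 \<in> X" and w: "\<forall>i. w i \<in> W"
    and w': "w' \<in> W" and jm: "1 \<le> j \<and> j < m"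
  define x where "x = traj f x0 w"
  define y where "y = traj f x0 (w(j := w'))"
  define v where "v = (\<lambda>i. w (j + i))"
  have cl: "\<forall>x\<in>X. \<forall>v\<in>W. f x + v \<in> X" using assms(3) f by blast
  have stab: "sys_stable X W f C \<rho>" using assms(4) f by blast
  have vW: "\<forall>i. v i \<in> W" using w by (simp add: v_def)
  have xX: "x i \<in> X" for i unfolding x_def using traj_in[OF x0 w cl] .
  obtain p where jp: "j = Suc p" using jm by (cases j) auto
  have yp: "y p = x p" unfolding x_def y_def by (rule traj_cong) (use jp in auto)
  have xj: "x j = f (x p) + w j" using jp by (simp add: x_def)
  have yj: "y j = f (x p) + w'" using jp yp by (simp add: y_def)
  have yjX: "y j \<in> X" using yj cl xX w' by auto
  have dj: "norm (x j - y j) \<le> 2 * wb"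
  proof -
    have "norm (x j - y j) = norm (w j - w')" by (simp add: xj yj)
    also have "\<dots> \<le> norm (w j) + norm w'" by (rule norm_triangle_ineq4)
    also have "\<dots> \<le> 2 * wb" using assms(11) w w' by (metis add_mono mult_2)
    finally show ?thesis .
  qed
  have xs: "x (j + k) = traj f (x j) v k" for k unfolding x_def v_def by (rule traj_shift)
  have ys: "y (j + k) = traj f (y j) v k" for k
  proof -
    have "y (j + k) = traj f (y j) (\<lambda>i. (w(j := w')) (j + i)) k"
      unfolding y_def by (rule traj_shift)
    also have "\<dots> = traj f (y j) v k" by (rule traj_cong) (auto simp: v_def)
    finally show ?thesis .
  qed
  have bnd: "norm (x (j + k) - y (j + k)) \<le> (2 * C * wb) * \<rho> ^ k" for k
  proof (cases "k = 0")
    case True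
    have "2 * wb \<le> 2 * C * wb" using assms(7,13) by simp
    then show ?thesis using dj True by simp
  next
    case False
    have k1: "1 \<le> k" using False by simp
    have "norm (traj f (x j) v k - traj f (y j) v k) \<le> C * \<rho> ^ k * norm (x j - y j)"
      by (rule stab[unfolded sys_stable_def, rule_format, OF xX yjX vW[rule_format] k1])
    then have "norm (x (j + k) - y (j + k)) \<le> C * \<rho> ^ k * norm (x j - y j)"
      by (simp only: xs ys)
    also have "\<dots> \<le> C * \<rho> ^ k * (2 * wb)"
      using dj assms(5,7) by (intro mult_left_mono) auto
    finally show ?thesis by (simp add: algebra_simps)
  qed
  have S: "(\<Sum>i=j..m. norm (x i - y i)) < 2 * C * wb / (1 - \<rho>)"
  proof -
    have "(\<Sum>i=j..m. norm (x i - y i)) = (\<Sum>k=0..m-j. norm (x (j + k) - y (j + k)))"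
      using sum.atLeastAtMost_shift_0[of j m "\<lambda>i. norm (x i - y i)"] jm by (simp add: comp_def)
    also have "\<dots> < 2 * C * wb / (1 - \<rho>)"
      using assms(5,6,7,13) bnd by (intro sum_bound) auto
    finally show ?thesis .
  qed
  have L: "\<bar>exp_loss D loss f alg (prefix f x0 w m) (x m)
       - exp_loss D loss f alg (prefix f x0 (w(j := w')) m) (y m)\<bar>
        \<le> K / real m * (\<Sum>i=j..m. norm (x i - y i))"
  proof -
    have "m \<ge> 1" using jm by simp
    note H = conjunct1[OF assms(9)[unfolded alg_stable_def, rule_format, OF f alg x0, where w=w, OF w[rule_format] this]]
    have c: "1 \<le> j \<and> j \<le> m \<and> w' \<in> W" using jm w' by simp
    show ?thesis unfolding x_def y_def by (rule H[rule_format, OF c])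
  qed
  have "0 < real m" using jm by simp
  from final_step[OF assms(8) this L S]
  show "\<bar>exp_loss D loss f alg (prefix f x0 w m) (traj f x0 w m)
             - exp_loss D loss f alg (prefix f x0 (w(j := w')) m) (traj f x0 (w(j := w')) m)\<bar>
            < K / real m * (2 * C * wb / (1 - \<rho>))"
    unfolding x_def y_def .
next
  fix f alg x0 x0' and w :: "nat \<Rightarrow> 'a" and m :: nat
  assume f: "f \<in> F" and alg: "alg \<in> A" and x0: "x0 \<in> X" and x0': "x0' \<in> X"
    and w: "\<forall>i. w i \<in> W" and m: "0 < m"
  have stab: "sys_stable X W f C \<rho>" using assms(4) f by blast
  have d0: "norm (x0 - x0') \<le> 2 * xb"
  proof -
    have "norm (x0 - x0') \<le> norm x0 + norm x0'" by (rule norm_triangle_ineq4)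
    also have "\<dots> \<le> 2 * xb" using assms(10) x0 x0' by (metis add_mono mult_2)
    finally show ?thesis .
  qed
  have bnd: "norm (traj f x0 w k - traj f x0' w k) \<le> (2 * C * xb) * \<rho> ^ k" for k
  proof (cases "k = 0")
    case True
    have "2 * xb \<le> 2 * C * xb" using assms(7,12) by simp
    then show ?thesis using d0 True by simp
  next
    case False
    have "norm (traj f x0 w k - traj f x0' w k) \<le> C * \<rho> ^ k * norm (x0 - x0')"
    proof -
      have k1: "1 \<le> k" using False by simp
      show ?thesis
        by (rule stab[unfolded sys_stable_def, rule_format, OF x0 x0' w[rule_format] k1])
    qed
    also have "\<dots> \<le> C * \<rho> ^ k * (2 * xb)"
      using d0 assms(5,7) by (intro mult_left_mono) auto
    finally show ?thesis by (simp add: algebra_simps)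
  qed
  have S: "(\<Sum>i=0..m. norm (traj f x0 w i - traj f x0' w i)) < 2 * C * xb / (1 - \<rho>)"
    using assms(5,6,7,12) bnd by (intro sum_bound) auto
  have "\<bar>exp_loss D loss f alg (prefix f x0 w m) (traj f x0 w m)
       - exp_loss D loss f alg (prefix f x0' w m) (traj f x0' w m)\<bar>
        \<le> K / real m * (\<Sum>i=0..m. norm (traj f x0 w i - traj f x0' w i))"
  proof -
    have "m \<ge> 1" using m by simp
    from conjunct2[OF assms(9)[unfolded alg_stable_def, rule_format, OF f alg x0, where w=w, OF w[rule_format] this]]
    show ?thesis using x0' by blast
  qed
  from final_step[OF assms(8) _ this S] m show "\<bar>exp_loss D loss f alg (prefix f x0 w m) (traj f x0 w m)
             - exp_loss D loss f alg (prefix f x0' w m) (traj f x0' w m)\<bar>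
            < K / real m * (2 * C * xb / (1 - \<rho>))"
    by simp
qed

end
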